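(* For every infinite cardinal $\kappa$, there is a subalgebra of the free Boolean algebra $\mathrm{Fr}(\kappa^+)$ which does not have the $\kappa$-FN.
   Context: $\mathrm{Fr}(\kappa^+)$ denotes the free Boolean algebra on $\kappa^+$ generators. For an infinite cardinal $\kappa$, a Boolean algebra $B$ has the $\kappa$-Freese–Nation property ($\kappa$-FN) if there is a map $f:B\to[B]^{<\kappa}$ such that for all $a,b\in B$ with $a\le b$ there is $c\in f(a)\cap f(b)$ with $a\le c\le b$. *)

theory Defs
  imports Main
begin

text \<open>The free Boolean algebra on a generator set X, realised concretely (Stone
  representation) as the algebra of subsets of the Cantor cube (all maps 'x \<Rightarrow> bool)
  generated by the generator sets {f. f x}, x \<in> X. Order is set inclusion.\<close>

inductive_set free_ba :: "'x set \<Rightarrow> ('x \<Rightarrow> bool) set set" for X :: "'x set" where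
  gen: "x \<in> X \<Longrightarrow> {f. f x} \<in> free_ba X"
| top: "UNIV \<in> free_ba X"
| compl: "A \<in> free_ba X \<Longrightarrow> - A \<in> free_ba X"
| inter: "A \<in> free_ba X \<Longrightarrow> B \<in> free_ba X \<Longrightarrow> A \<inter> B \<in> free_ba X"

definition bsubalgebra :: "'a set set \<Rightarrow> 'a set set \<Rightarrow> bool" where
  "bsubalgebra S B \<longleftrightarrow> S \<subseteq> B \<and> UNIV \<in> S \<and> (\<forall>a\<in>S. - a \<in> S)
     \<and> (\<forall>a\<in>S. \<forall>b\<in>S. a \<inter> b \<in> S)"

text \<open>kappa-Freese-Nation property, kappa given as the cardinality of the set K.\<close>
definition kappa_FN :: "'k set \<Rightarrow> 'a set set \<Rightarrow> bool" where
  "kappa_FN K B \<longleftrightarrow> (\<exists>f :: 'a set \<Rightarrow> 'a set set.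
      (\<forall>a\<in>B. f a \<subseteq> B \<and> (card_of (f a), card_of K) \<in> ordLess) \<and>
      (\<forall>a\<in>B. \<forall>b\<in>B. a \<subseteq> b \<longrightarrow> (\<exists>c\<in>f a \<inter> f b. a \<subseteq> c \<and> c \<subseteq> b)))"

end

theory Submission
  imports Defs
begin

unbundle cardinal_syntax

lemma fin_less_inf:
  assumes "finite A" "infinite B" shows "|A| <o |B|"
  using finite_ordLess_infinite[of "|A|" "|B|"] assms
  by (simp add: Field_card_of card_of_Well_order card_of_well_order_on)

lemma union_fin_leq:
  assumes "infinite K" "|I| \<le>o |K|" "\<forall>i\<in>I. finite (A i)"
  shows "|\<Union>i\<in>I. A i| \<le>o |K|"
  apply (rule card_of_UNION_ordLeq_infinite[OF assms(1,2)])
  using assms fin_less_inf ordLess_imp_ordLeq by blast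

lemma union_fin_less:
  assumes "infinite K" "|I| <o |K|" "\<forall>i\<in>I. finite (A i)"
  shows "|\<Union>i\<in>I. A i| <o |K|"
proof (cases "finite I")
  case True
  then show ?thesis using assms by (intro fin_less_inf) auto
next
  case False
  have "|\<Union>i\<in>I. A i| \<le>o |I|"
    using union_fin_leq[OF False _ assms(3)] ordLeq_refl card_of_Card_order by blast
  then show ?thesis using assms(2) ordLeq_ordLess_trans by blast
qed

inductive_set gS :: "'x \<Rightarrow> 'x set \<Rightarrow> 'x set \<Rightarrow> ('x \<Rightarrow> bool) set set"
  for w :: 'x and Z :: "'x set" and Y :: "'x set" where
  ga: "z \<in> Z \<Longrightarrow> {f. f z \<and> f w} \<in> gS w Z Y"
| gb: "y \<in> Y \<Longrightarrow> {f. f w \<or> f y} \<in> gS w Z Y"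
| gt: "UNIV \<in> gS w Z Y"
| gc: "A \<in> gS w Z Y \<Longrightarrow> - A \<in> gS w Z Y"
| gi: "A \<in> gS w Z Y \<Longrightarrow> B \<in> gS w Z Y \<Longrightarrow> A \<inter> B \<in> gS w Z Y"

lemma gS_sub:
  assumes "w \<in> X" "Z \<subseteq> X" "Y \<subseteq> X"
  shows "c \<in> gS w Z Y \<Longrightarrow> c \<in> free_ba X"
proof (induction rule: gS.induct)
  case (ga z)
  have e: "{f. f z \<and> f w} = {f. f z} \<inter> {f. f w}" by auto
  have "{f. f z} \<in> free_ba X" using ga assms by (blast intro: free_ba.gen)
  moreover have "{f. f w} \<in> free_ba X" using assms by (blast intro: free_ba.gen)
  ultimately show ?case unfolding e by (rule free_ba.inter)
next
  case (gb y)
  have e: "{f. f w \<or> f y} = - (- {f. f w} \<inter> - {f. f y})" by auto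
  have "{f. f y} \<in> free_ba X" using gb assms by (blast intro: free_ba.gen)
  moreover have "{f. f w} \<in> free_ba X" using assms by (blast intro: free_ba.gen)
  ultimately show ?case unfolding e by (intro free_ba.compl free_ba.inter)
next
  case gt
  show ?case by (rule free_ba.top)
next
  case (gc A)
  then show ?case by (simp add: free_ba.compl)
next
  case (gi A B)
  then show ?case by (simp add: free_ba.inter)
qed

lemma gS_supp:
  "c \<in> gS w Z Y \<Longrightarrow> \<exists>F. finite F \<and> (\<forall>f g. (\<forall>x\<in>F. f x = g x) \<longrightarrow> (f \<in> c \<longleftrightarrow> g \<in> c))"
proof (induction rule: gS.induct)
  case (ga z)
  show ?case by (rule exI[of _ "{z,w}"]) auto
next
  case (gb y)
  show ?case by (rule exI[of _ "{y,w}"]) auto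
next
  case gt
  show ?case by auto
next
  case (gc A)
  then show ?case by auto
next
  case (gi A B)
  then obtain F1 F2 where F1: "finite F1" "\<forall>f g. (\<forall>x\<in>F1. f x = g x) \<longrightarrow> (f \<in> A \<longleftrightarrow> g \<in> A)"
    and F2: "finite F2" "\<forall>f g. (\<forall>x\<in>F2. f x = g x) \<longrightarrow> (f \<in> B \<longleftrightarrow> g \<in> B)" by blast
  then show ?case
  proof (intro exI[of _ "F1 \<union> F2"] conjI allI impI)
    fix f g :: "'a \<Rightarrow> bool" assume h: "\<forall>x\<in>F1 \<union> F2. f x = g x"
    have "f \<in> A \<longleftrightarrow> g \<in> A" using h F1 by simp
    moreover have "f \<in> B \<longleftrightarrow> g \<in> B" using h F2 by simp
    ultimately show "f \<in> A \<inter> B \<longleftrightarrow> g \<in> A \<inter> B" by blast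
  qed (use F1 F2 in simp)
qed

lemma gS_swap:
  assumes "w \<notin> Z" "w \<notin> Y" "Y \<inter> Z = {}"
  shows "c \<in> gS w Z Y \<Longrightarrow> ((\<lambda>x. x \<notin> Z) \<in> c \<longleftrightarrow> ((\<lambda>x. x \<notin> Z)(w := False)) \<in> c)"
proof (induction rule: gS.induct)
  case (ga z)
  then show ?case using assms by auto
next
  case (gb y)
  then show ?case using assms by auto
qed auto

lemma gS_dich:
  assumes "w \<notin> Z" "w \<notin> Y" "Y \<inter> Z = {}" "c \<in> gS w Z Y"
  shows "finite {z\<in>Z. {f. f z \<and> f w} \<subseteq> c} \<or> finite {y\<in>Y. c \<subseteq> {f. f w \<or> f y}}"
proof (rule ccontr)
  assume "\<not> ?thesis"
  hence i1: "infinite {z\<in>Z. {f. f z \<and> f w} \<subseteq> c}" and i2: "infinite {y\<in>Y. c \<subseteq> {f. f w \<or> f y}}"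
    by auto
  obtain F where F: "finite F" "\<forall>f g. (\<forall>x\<in>F. f x = g x) \<longrightarrow> (f \<in> c \<longleftrightarrow> g \<in> c)"
    using gS_supp[OF assms(4)] by blast
  obtain z where z: "z \<in> Z" "{f. f z \<and> f w} \<subseteq> c" "z \<notin> F"
    using i1 F(1) by (metis (no_types, lifting) finite_subset mem_Collect_eq subsetI)
  obtain y where y: "y \<in> Y" "c \<subseteq> {f. f w \<or> f y}" "y \<notin> F"
    using i2 F(1) by (metis (no_types, lifting) finite_subset mem_Collect_eq subsetI)
  define p where "p = (\<lambda>x. x \<notin> Z)"
  have "p(z := True) \<in> c" using z assms by (auto simp: p_def)
  hence pc: "p \<in> c" using F z(3) by (metis fun_upd_other)
  have "p(w := False, y := False) \<notin> {f. f w \<or> f y}" using y assms by auto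
  hence "p(w := False, y := False) \<notin> c" using y(2) by blast
  hence "p(w := False) \<notin> c" using F y(3) by (metis fun_upd_other)
  then show False using pc gS_swap[OF assms] unfolding p_def by blast
qed

theorem proposition7p6:
  fixes K :: "'k set" and X :: "'x set"
  assumes "infinite K"
    and "(card_of X, cardSuc (card_of K)) \<in> ordIso"
  shows "\<exists>S. bsubalgebra S (free_ba X) \<and> \<not> kappa_FN K S"
proof -
  have kX: "|K| <o |X|"
    using cardSuc_greater[OF card_of_Card_order[of K]] assms(2)
    by (meson ordIso_symmetric ordLess_ordIso_trans)
  hence "|K| \<le>o |X|" by (rule ordLess_imp_ordLeq)
  then obtain g where g: "inj_on g K" "g ` K \<subseteq> X" using card_of_ordLeq[of K X] by blast
  define Z where "Z = g ` K"
  have ZK: "|Z| =o |K|"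
    using g unfolding Z_def by (metis bij_betw_imageI card_of_ordIso ordIso_symmetric)
  have ZX: "Z \<subseteq> X" using g Z_def by simp
  have KinfF: "\<not> finite (Field |K| )" using assms(1) by (simp add: Field_card_of)
  have nXK: "\<not> |X| \<le>o |K|" using kX not_ordLess_ordLeq by blast
  have H1: "\<not> |X - Z| \<le>o |K|"
  proof
    assume h: "|X - Z| \<le>o |K|"
    have "|Z| \<le>o |K|" using ZK ordIso_iff_ordLeq by blast
    hence "|Z \<union> (X - Z)| \<le>o |K|"
      using card_of_Un_ordLeq_infinite_Field[OF KinfF _ h card_of_Card_order] by blast
    moreover have "Z \<union> (X - Z) = X" using ZX by blast
    ultimately show False using nXK by simp
  qed
  have "infinite (X - Z)"
    using H1 fin_less_inf[OF _ assms(1)] ordLess_imp_ordLeq by blast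
  then obtain w where w: "w \<in> X - Z" by (metis ex_in_conv finite.emptyI)
  define Y where "Y = X - Z - {w}"
  have H2: "\<not> |Y| \<le>o |K|"
  proof
    assume h: "|Y| \<le>o |K|"
    have "|{w}| \<le>o |K|" using fin_less_inf[OF _ assms(1)] ordLess_imp_ordLeq by blast
    hence "|{w} \<union> Y| \<le>o |K|"
      using card_of_Un_ordLeq_infinite_Field[OF KinfF _ h card_of_Card_order] by blast
    moreover have "{w} \<union> Y = X - Z" using w Y_def by blast
    ultimately show False using H1 by simp
  qed
  have wZ: "w \<notin> Z" and wY: "w \<notin> Y" and YZ: "Y \<inter> Z = {}" and YX: "Y \<subseteq> X" and wX: "w \<in> X"
    using w Y_def by auto
  define S where "S = gS w Z Y"
  define a where "a = (\<lambda>z. {f :: 'x \<Rightarrow> bool. f z \<and> f w})"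
  define b where "b = (\<lambda>y. {f :: 'x \<Rightarrow> bool. f w \<or> f y})"
  have aS: "z \<in> Z \<Longrightarrow> a z \<in> S" for z unfolding a_def S_def by (rule gS.ga)
  have bS: "y \<in> Y \<Longrightarrow> b y \<in> S" for y unfolding b_def S_def by (rule gS.gb)
  have ab: "a z \<subseteq> b y" for z y unfolding a_def b_def by auto
  have sub: "bsubalgebra S (free_ba X)"
    unfolding bsubalgebra_def S_def
  proof (intro conjI ballI subsetI)
    show "c \<in> free_ba X" if "c \<in> gS w Z Y" for c using gS_sub[OF wX ZX YX that] .
    show "UNIV \<in> gS w Z Y" by (rule gS.gt)
    show "- c \<in> gS w Z Y" if "c \<in> gS w Z Y" for c using that by (rule gS.gc)
    show "c \<inter> d \<in> gS w Z Y" if "c \<in> gS w Z Y" "d \<in> gS w Z Y" for c d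
      using that by (rule gS.gi)
  qed
  have nFN: "\<not> kappa_FN K S"
  proof
    assume "kappa_FN K S"
    then obtain f where f1: "\<forall>x\<in>S. f x \<subseteq> S \<and> |f x| <o |K|"
      and f2: "\<forall>x\<in>S. \<forall>y\<in>S. x \<subseteq> y \<longrightarrow> (\<exists>c\<in>f x \<inter> f y. x \<subseteq> c \<and> c \<subseteq> y)"
      unfolding kappa_FN_def by blast
    define L where "L = (\<lambda>c. {z\<in>Z. a z \<subseteq> c})"
    define R where "R = (\<lambda>c. {y\<in>Y. c \<subseteq> b y})"
    have dich: "c \<in> S \<Longrightarrow> finite (L c) \<or> finite (R c)" for c
      using gS_dich[OF wZ wY YZ, of c] unfolding S_def L_def R_def a_def b_def by simp
    define Ycov where "Ycov = (\<Union>z\<in>Z. \<Union>c\<in>{c\<in>f (a z). finite (R c)}. R c)"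
    have "|Ycov| \<le>o |K|"
      unfolding Ycov_def
    proof (rule card_of_UNION_ordLeq_infinite[OF assms(1)])
      show "|Z| \<le>o |K|" using ZK ordIso_iff_ordLeq by blast
      show "\<forall>z\<in>Z. |\<Union>c\<in>{c\<in>f (a z). finite (R c)}. R c| \<le>o |K|"
      proof
        fix z assume z: "z \<in> Z"
        have "|{c\<in>f (a z). finite (R c)}| \<le>o |f (a z)|" by (rule card_of_mono1) blast
        moreover have "|f (a z)| \<le>o |K|" using f1 aS[OF z] ordLess_imp_ordLeq by blast
        ultimately have "|{c\<in>f (a z). finite (R c)}| \<le>o |K|" using ordLeq_transitive by blast
        then show "|\<Union>c\<in>{c\<in>f (a z). finite (R c)}. R c| \<le>o |K|"
          using union_fin_leq[OF assms(1)] by blast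
      qed
    qed
    have "\<not> Y \<subseteq> Ycov"
    proof
      assume "Y \<subseteq> Ycov"
      hence "|Y| \<le>o |Ycov|" by (rule card_of_mono1)
      with \<open>|Ycov| \<le>o |K|\<close> H2 show False using ordLeq_transitive by blast
    qed
    then obtain y where y: "y \<in> Y" "y \<notin> Ycov" by blast
    define C where "C = {c\<in>f (b y). finite (L c)}"
    have cover: "Z \<subseteq> (\<Union>c\<in>C. L c)"
    proof
      fix z assume z: "z \<in> Z"
      have "\<exists>c\<in>f (a z) \<inter> f (b y). a z \<subseteq> c \<and> c \<subseteq> b y"
        by (rule mp[OF bspec[OF bspec[OF f2 aS[OF z]] bS[OF y(1)]] ab])
      then obtain c where c: "c \<in> f (a z)" "c \<in> f (b y)" "a z \<subseteq> c" "c \<subseteq> b y"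
        by (elim bexE IntE conjE) simp
      have "f (a z) \<subseteq> S" using f1 aS[OF z] by simp
      hence cS: "c \<in> S" using c(1) by (rule subsetD)
      have yR: "y \<in> R c" unfolding R_def using y(1) c(4) by simp
      have "\<not> finite (R c)"
      proof
        assume "finite (R c)"
        hence "c \<in> {c\<in>f (a z). finite (R c)}" using c(1) by simp
        hence "y \<in> (\<Union>c\<in>{c\<in>f (a z). finite (R c)}. R c)" using yR by (rule UN_I)
        hence "y \<in> Ycov" unfolding Ycov_def using z by (rule UN_I[rotated])
        with y(2) show False by blast
      qed
      hence "finite (L c)" using dich[OF cS] by blast
      moreover have "z \<in> L c" using z c L_def by blast
      ultimately show "z \<in> (\<Union>c\<in>C. L c)" using c(2) C_def by blast
    qed
    have "|C| \<le>o |f (b y)|" unfolding C_def by (rule card_of_mono1) blast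
    moreover have "|f (b y)| <o |K|" using f1 bS[OF y(1)] by blast
    ultimately have "|C| <o |K|" using ordLeq_ordLess_trans by blast
    hence "|\<Union>c\<in>C. L c| <o |K|" using union_fin_less[OF assms(1)] C_def by blast
    moreover have "|Z| \<le>o |\<Union>c\<in>C. L c|" using cover by (rule card_of_mono1)
    ultimately have "|Z| <o |K|" using ordLeq_ordLess_trans by blast
    then show False using ZK by (meson not_ordLess_ordIso)
  qed
  show ?thesis using sub nFN by blast
qed

end
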